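(* Let $l,m,p,q\in\mathbb{N}$, $f\in\mathrm{Hom}_\Omega([l],[p])$, $g\in\mathrm{Hom}_\Omega([m],[q])$ and let $H\in G[l]$, $K\in G[m]$. Then, for $\varrho\in C(H)$, $\varsigma\in C(K)$, $(f\smile g)_{H\smile K*}(\varrho\smile\varsigma)=f_{H*}(\varrho)\smile g_{K*}(\varsigma)$.
   Context: $\Omega$ is the category of finite ordinals $[l]=\{0,\dots,l-1\}$ and all functions; for $f:[l]\to[p]$, $g:[m]\to[q]$, $f\smile g:[l+m]\to[p+q]$ is $f\smile g(i)=f(i)$ for $i\in[l]$ and $g(i-l)+p$ for $i\in[m]+l$. $G[l]$ is the set of hypergraphs on $[l]$ (sets of non empty subsets of $[l]$), $Gf(H)=\{f(X)\mid X\in H\}$, and $H\smile K=H\cup(K+l)$ with $K+l=\{X+l\mid X\in K\}$. Fix finite additive commutative monoids $\mathsf{A}$, $\mathsf{M}$. For finite $X\subset\mathbb{N}$, $\mathsf{A}^X$ is the monoid of functions $X\to\mathsf{A}$; for $f:X\to Y$, $f_\star(w)(s)=\sum_{r\in X,f(r)=s}w(r)$; for $\varpi:\mathsf{A}^X\to\mathsf{M}$, $f_*(\varpi)(v)=\sum_{w\in\mathsf{A}^X,f_\star(w)=v}\varpi(w)$. A calibration $\varrho\in C(H)$ assigns to each $X\in H$ a function $\varrho_X:\mathsf{A}^X\to\mathsf{M}$. For $f\in\mathrm{Hom}_\Omega([l],[m])$, $f_{H*}:C(H)\to C(Gf(H))$ is $f_{H*}(\varrho)_Y=\sum_{X\in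 H,f(X)=Y}f|_{X*}(\varrho_X)$. With $t_{Xl}(r)=r-l$ on $X\subset\mathbb{N}+l$, the calibration monadic product is $(\varrho\smile\varsigma)_X=\varrho_X$ for $X\in H$ and $\varsigma_{X-l}\circ t_{Xl\star}$ for $X\in K+l$. *)

theory Defs
  imports Main
begin

definition ordinal :: "nat \<Rightarrow> nat set" where "ordinal l = {..<l}"

text \<open>Morphisms of Omega: functions [l] -> [p] (values outside [l] irrelevant).\<close>
definition omega_hom :: "nat \<Rightarrow> nat \<Rightarrow> (nat \<Rightarrow> nat) \<Rightarrow> bool" where
  "omega_hom l p f \<longleftrightarrow> f ` ordinal l \<subseteq> ordinal p"

definition omega_smile :: "nat \<Rightarrow> nat \<Rightarrow> (nat \<Rightarrow> nat) \<Rightarrow> (nat \<Rightarrow> nat) \<Rightarrow> nat \<Rightarrow> nat" where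
  "omega_smile l p f g = (\<lambda>i. if i < l then f i else g (i - l) + p)"

definition hypergraph :: "nat \<Rightarrow> nat set set \<Rightarrow> bool" where
  "hypergraph l H \<longleftrightarrow> (\<forall>X\<in>H. X \<noteq> {} \<and> X \<subseteq> ordinal l)"

definition Gmap :: "(nat \<Rightarrow> nat) \<Rightarrow> nat set set \<Rightarrow> nat set set" where
  "Gmap f H = (\<lambda>X. f ` X) ` H"

definition shift_set :: "nat set \<Rightarrow> nat \<Rightarrow> nat set" where
  "shift_set X l = (\<lambda>r. r + l) ` X"

definition hg_smile :: "nat \<Rightarrow> nat set set \<Rightarrow> nat set set \<Rightarrow> nat set set" where
  "hg_smile l H K = H \<union> (\<lambda>X. shift_set X l) ` K"

text \<open>A^X: functions X -> A, represented as functions nat -> A vanishing outside X.\<close>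
definition cube :: "nat set \<Rightarrow> (nat \<Rightarrow> 'a::{comm_monoid_add,finite}) set" where
  "cube X = {w. \<forall>r. r \<notin> X \<longrightarrow> w r = 0}"

definition push_star :: "nat set \<Rightarrow> (nat \<Rightarrow> nat) \<Rightarrow> (nat \<Rightarrow> 'a::{comm_monoid_add,finite}) \<Rightarrow> nat \<Rightarrow> 'a" where
  "push_star X f w = (\<lambda>s. \<Sum>r\<in>{r\<in>X. f r = s}. w r)"

definition push_fun :: "nat set \<Rightarrow> (nat \<Rightarrow> nat) \<Rightarrow> ((nat \<Rightarrow> 'a::{comm_monoid_add,finite}) \<Rightarrow> 'm::{comm_monoid_add,finite})
    \<Rightarrow> (nat \<Rightarrow> 'a) \<Rightarrow> 'm" where
  "push_fun X f \<omega> = (\<lambda>v. \<Sum>w\<in>{w\<in>cube X. push_star X f w = v}. \<omega> w)"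

text \<open>Calibrations: assign to each hyperedge X a function A^X -> M
  (only the values at X in H and w in A^X are meaningful).\<close>
type_synonym ('a,'m) calib = "nat set \<Rightarrow> (nat \<Rightarrow> 'a) \<Rightarrow> 'm"

definition calib_push :: "(nat \<Rightarrow> nat) \<Rightarrow> nat set set \<Rightarrow> ('a::{comm_monoid_add,finite},'m::{comm_monoid_add,finite}) calib
    \<Rightarrow> ('a,'m) calib" where
  "calib_push f H \<rho> = (\<lambda>Y. \<lambda>v. \<Sum>X\<in>{X\<in>H. f ` X = Y}. push_fun X f (\<rho> X) v)"

definition calib_smile :: "nat \<Rightarrow> nat set set \<Rightarrow> ('a::{comm_monoid_add,finite},'m::{comm_monoid_add,finite}) calib
    \<Rightarrow> ('a,'m) calib \<Rightarrow> ('a,'m) calib" where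
  "calib_smile l H \<rho> \<sigma> = (\<lambda>X. if X \<in> H then \<rho> X
      else (\<lambda>w. \<sigma> ((\<lambda>r. r - l) ` X) (push_star X (\<lambda>r. r - l) w)))"

definition calib_eq :: "nat set set \<Rightarrow> ('a::{comm_monoid_add,finite},'m::{comm_monoid_add,finite}) calib
    \<Rightarrow> ('a,'m) calib \<Rightarrow> bool" where
  "calib_eq H \<rho> \<sigma> \<longleftrightarrow> (\<forall>X\<in>H. \<forall>w\<in>cube X. \<rho> X w = \<sigma> X w)"

end

theory Submission
  imports Defs
begin

lemma L1:
  assumes "Z \<subseteq> {k..}" "w \<in> cube Z"
  shows "push_star Z (\<lambda>r. r - k) w = (\<lambda>s. w (s + k))"
proof
  fix s
  have "{r\<in>Z. r - k = s} = (if s + k \<in> Z then {s + k} else {})"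
    using assms(1) by auto
  then show "push_star Z (\<lambda>r. r - k) w s = w (s + k)"
    using assms(2) by (auto simp: push_star_def cube_def)
qed

lemma L2:
  "push_star (shift_set X l) F u = (\<lambda>s. \<Sum>r'\<in>{r'\<in>X. F (r'+l) = s}. u (r'+l))"
proof
  fix s
  have e: "{r\<in>shift_set X l. F r = s} = (\<lambda>r. r + l) ` {r'\<in>X. F (r'+l) = s}"
    by (auto simp: shift_set_def)
  have "inj_on (\<lambda>r. r + l) {r'\<in>X. F (r'+l) = s}" by (auto simp: inj_on_def)
  then show "push_star (shift_set X l) F u s = (\<Sum>r'\<in>{r'\<in>X. F (r'+l) = s}. u (r'+l))"
    unfolding push_star_def e by (simp add: sum.reindex)
qed

lemma LB:
  fixes s :: "(nat \<Rightarrow> 'a::{comm_monoid_add,finite}) \<Rightarrow> 'm::{comm_monoid_add,finite}"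
  assumes F: "\<And>r'. F (r'+l) = g r' + p" and w: "w \<in> cube Y" and Y: "Y \<subseteq> {p..}"
  shows "push_fun (shift_set X l) F (\<lambda>u. s (push_star (shift_set X l) (\<lambda>r. r-l) u)) w
       = push_fun X g s (push_star Y (\<lambda>r. r-p) w)"
proof -
  have sh: "shift_set X l \<subseteq> {l..}" by (auto simp: shift_set_def)
  define S1 where "S1 = {u\<in>cube (shift_set X l). push_star (shift_set X l) F u = w}"
  define S2 where "S2 = {v\<in>cube X. push_star X g v = (\<lambda>t. w (t+p))}"
  have ps2: "push_star Y (\<lambda>r. r-p) w = (\<lambda>t. w (t+p))" using L1[OF Y w] .
  have lhs: "push_fun (shift_set X l) F (\<lambda>u. s (push_star (shift_set X l) (\<lambda>r. r-l) u)) w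
      = (\<Sum>u\<in>S1. s (\<lambda>r. u (r+l)))"
    unfolding push_fun_def S1_def
    by (rule sum.cong) (auto simp: L1[OF sh])
  have rhs: "push_fun X g s (push_star Y (\<lambda>r. r-p) w) = (\<Sum>v\<in>S2. s v)"
    unfolding push_fun_def S2_def ps2 by simp
  have bij: "bij_betw (\<lambda>u r. u (r+l)) S1 S2"
  proof (rule bij_betw_byWitness[where f'="\<lambda>v r. if l \<le> r then v (r-l) else 0"])
    show "\<forall>a\<in>S1. (\<lambda>r. if l \<le> r then a (r - l + l) else 0) = a"
    proof
      fix a assume "a \<in> S1"
      then have "\<forall>r. r \<notin> shift_set X l \<longrightarrow> a r = 0" by (auto simp: S1_def cube_def)
      moreover have "r < l \<Longrightarrow> r \<notin> shift_set X l" for r by (auto simp: shift_set_def)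
      ultimately show "(\<lambda>r. if l \<le> r then a (r - l + l) else 0) = a"
        by (auto simp: fun_eq_iff)
    qed
    show "\<forall>a'\<in>S2. (\<lambda>r. if l \<le> r + l then a' (r + l - l) else 0) = a'" by simp
    show "(\<lambda>u r. u (r + l)) ` S1 \<subseteq> S2"
    proof
      fix v assume "v \<in> (\<lambda>u r. u (r + l)) ` S1"
      then obtain u where u: "u \<in> S1" and v: "v = (\<lambda>r. u (r + l))" by auto
      have "v \<in> cube X" using u unfolding v S1_def cube_def shift_set_def by (auto simp: image_iff) (metis add_right_cancel)
      moreover have "push_star X g v = (\<lambda>t. w (t+p))"
      proof
        fix t
        have "w (t+p) = push_star (shift_set X l) F u (t+p)" using u by (simp add: S1_def)
        also have "\<dots> = push_star X g v t" unfolding L2 by (simp add: push_star_def v F)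
        finally show "push_star X g v t = w (t+p)" by simp
      qed
      ultimately show "v \<in> S2" by (simp add: S2_def)
    qed
    show "(\<lambda>v r. if l \<le> r then v (r - l) else 0) ` S2 \<subseteq> S1"
    proof
      fix u assume "u \<in> (\<lambda>v r. if l \<le> r then v (r - l) else 0) ` S2"
      then obtain v where v: "v \<in> S2" and u: "u = (\<lambda>r. if l \<le> r then v (r - l) else 0)" by auto
      have "u \<in> cube (shift_set X l)"
      proof -
        have "r \<notin> shift_set X l \<Longrightarrow> u r = 0" for r
        proof -
          assume r: "r \<notin> shift_set X l"
          show "u r = 0"
          proof (cases "l \<le> r")
            case True
            then have "r - l \<notin> X" using r by (auto simp: shift_set_def image_iff)
            then show ?thesis using v True by (auto simp: u S2_def cube_def)
          qed (simp add: u)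
        qed
        then show ?thesis by (simp add: cube_def)
      qed
      moreover have "push_star (shift_set X l) F u = w"
      proof
        fix s'
        have "push_star (shift_set X l) F u s' = (\<Sum>r'\<in>{r'\<in>X. g r' + p = s'}. v r')"
          unfolding L2 by (simp add: F u)
        also have "\<dots> = w s'"
        proof (cases "p \<le> s'")
          case True
          have "{r'\<in>X. g r' + p = s'} = {r'\<in>X. g r' = s' - p}" using True by auto
          then have "(\<Sum>r'\<in>{r'\<in>X. g r' + p = s'}. v r') = push_star X g v (s' - p)"
            by (simp add: push_star_def)
          also have "\<dots> = w (s' - p + p)" using v by (simp add: S2_def)
          finally show ?thesis using True by simp
        next
          case False
          then have "{r'\<in>X. g r' + p = s'} = {}" by auto
          moreover have "s' \<notin> Y" using Y False by auto
          ultimately show ?thesis using w by (simp only: cube_def) simp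
        qed
        finally show "push_star (shift_set X l) F u s' = w s'" .
      qed
      ultimately show "u \<in> S1" by (simp add: S1_def)
    qed
  qed
  show ?thesis unfolding lhs rhs using sum.reindex_bij_betw[OF bij, of s] by simp
qed

lemma push_fun_cong:
  fixes \<phi> :: "(nat \<Rightarrow> 'a::{comm_monoid_add,finite}) \<Rightarrow> 'm::{comm_monoid_add,finite}"
  assumes "\<And>r. r \<in> X \<Longrightarrow> F r = f r"
  shows "push_fun X F \<phi> = push_fun X f \<phi>"
proof -
  have "push_star X F = (push_star X f :: (nat \<Rightarrow> 'a) \<Rightarrow> _)"
    unfolding push_star_def using assms by (intro ext sum.cong) auto
  then show ?thesis unfolding push_fun_def by (simp only:)
qed

theorem proposition3p24:
  fixes l m p q :: nat and f g :: "nat \<Rightarrow> nat" and H K :: "nat set set"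
    and \<rho> \<sigma> :: "('a::{comm_monoid_add,finite},'m::{comm_monoid_add,finite}) calib"
  assumes "omega_hom l p f" and "omega_hom m q g"
    and "hypergraph l H" and "hypergraph m K"
  shows "calib_eq (Gmap (omega_smile l p f g) (hg_smile l H K))
           (calib_push (omega_smile l p f g) (hg_smile l H K) (calib_smile l H \<rho> \<sigma>))
           (calib_smile p (Gmap f H) (calib_push f H \<rho>) (calib_push g K \<sigma>))"
  unfolding calib_eq_def
proof (intro ballI)
  define F where "F = omega_smile l p f g"
  have Flow: "r < l \<Longrightarrow> F r = f r" for r by (simp add: F_def omega_smile_def)
  have Fhigh: "F (r' + l) = g r' + p" for r' by (simp add: F_def omega_smile_def)
  have fp: "r < l \<Longrightarrow> f r < p" for r using assms(1) by (auto simp: omega_hom_def ordinal_def)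
  have Hsub: "X \<in> H \<Longrightarrow> X \<noteq> {} \<and> X \<subseteq> {..<l}" for X
    using assms(3) by (auto simp: hypergraph_def ordinal_def)
  have Kne: "X \<in> K \<Longrightarrow> X \<noteq> {}" for X
    using assms(4) by (auto simp: hypergraph_def)
  have FH: "X \<in> H \<Longrightarrow> F ` X = f ` X" for X using Hsub Flow by (auto intro!: image_cong)
  have fHsub: "X \<in> H \<Longrightarrow> f ` X \<subseteq> {..<p}" for X using Hsub fp by auto
  have FK: "F ` shift_set X l = (\<lambda>s. s + p) ` (g ` X)" for X
    by (auto simp: shift_set_def Fhigh image_image)
  have shH: "X \<in> K \<Longrightarrow> shift_set X l \<notin> H" for X
  proof
    assume "X \<in> K" "shift_set X l \<in> H"
    then obtain x where "x \<in> X" using Kne by auto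
    then have "x + l \<in> shift_set X l" by (simp add: shift_set_def)
    then show False using Hsub[OF \<open>shift_set X l \<in> H\<close>] by auto
  qed
  have shinv: "(\<lambda>r. r - l) ` shift_set X l = X" for X
    by (force simp: shift_set_def image_image)
  fix Y and w :: "nat \<Rightarrow> 'a"
  assume Y: "Y \<in> Gmap (omega_smile l p f g) (hg_smile l H K)" and w: "w \<in> cube Y"
  then have "Y \<in> Gmap F (hg_smile l H K)" by (simp add: F_def)
  then consider (A) X0 where "X0 \<in> H" "Y = F ` X0" | (B) X0 where "X0 \<in> K" "Y = F ` shift_set X0 l"
    by (auto simp: Gmap_def hg_smile_def)
  then show "calib_push (omega_smile l p f g) (hg_smile l H K) (calib_smile l H \<rho> \<sigma>) Y w =
         calib_smile p (Gmap f H) (calib_push f H \<rho>) (calib_push g K \<sigma>) Y w"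
  proof cases
    case A
    have YfH: "Y \<in> Gmap f H" using A FH by (auto simp: Gmap_def)
    have Ysub: "Y \<subseteq> {..<p}" "Y \<noteq> {}" using A FH fHsub Hsub by auto
    have idx: "{X \<in> hg_smile l H K. F ` X = Y} = {X\<in>H. f ` X = Y}"
    proof -
      have "X \<in> K \<Longrightarrow> F ` shift_set X l \<noteq> Y" for X
      proof
        assume "X \<in> K" "F ` shift_set X l = Y"
        then obtain x where "x \<in> X" using Kne by auto
        then have "g x + p \<in> Y" using \<open>F ` shift_set X l = Y\<close> FK by auto
        then show False using Ysub by auto
      qed
      then show ?thesis using FH unfolding hg_smile_def by blast
    qed
    show ?thesis
      unfolding F_def[symmetric] calib_push_def calib_smile_def idx
      using YfH
    proof (simp, intro sum.cong refl)
      fix X assume "X \<in> {X \<in> H. f ` X = Y}"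
      then have "X \<subseteq> {..<l}" using Hsub by auto
      then have "push_fun X F (\<rho> X) = push_fun X f (\<rho> X)"
        by (intro push_fun_cong Flow) auto
      then show "push_fun X F (\<rho> X) w = push_fun X f (\<rho> X) w" by simp
    qed
  next
    case B
    have Yg: "Y = (\<lambda>s. s + p) ` (g ` X0)" using B FK by simp
    have Ysub: "Y \<subseteq> {p..}" using Yg by auto
    have YnfH: "Y \<notin> Gmap f H"
    proof
      assume "Y \<in> Gmap f H"
      then obtain X where "X \<in> H" "Y = f ` X" by (auto simp: Gmap_def)
      then have "Y \<subseteq> {..<p}" using fHsub by auto
      moreover obtain x where "x \<in> X0" using Kne B by auto
      ultimately show False using Yg by auto
    qed
    have Yp: "(\<lambda>r. r - p) ` Y = g ` X0" using Yg by (force simp: image_image)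
    have idx: "{X \<in> hg_smile l H K. F ` X = Y} = (\<lambda>X. shift_set X l) ` {X\<in>K. g ` X = g ` X0}"
    proof -
      have "X \<in> H \<Longrightarrow> F ` X \<noteq> Y" for X using YnfH FH by (auto simp: Gmap_def)
      moreover have "F ` shift_set X l = Y \<longleftrightarrow> g ` X = g ` X0" for X
        unfolding FK Yg by (auto simp: inj_image_eq_iff inj_on_def)
      note a = this
      show ?thesis
      proof (rule set_eqI, rule iffI)
        fix X assume "X \<in> {X \<in> hg_smile l H K. F ` X = Y}"
        then have X: "X \<in> H \<or> X \<in> (\<lambda>X. shift_set X l) ` K" "F ` X = Y" by (auto simp: hg_smile_def)
        with \<open>\<And>X. X \<in> H \<Longrightarrow> F ` X \<noteq> Y\<close> obtain X' where "X' \<in> K" "X = shift_set X' l" by auto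
        then show "X \<in> (\<lambda>X. shift_set X l) ` {X\<in>K. g ` X = g ` X0}" using a X(2) by auto
      next
        fix X assume "X \<in> (\<lambda>X. shift_set X l) ` {X\<in>K. g ` X = g ` X0}"
        then obtain X' where "X' \<in> K" "g ` X' = g ` X0" "X = shift_set X' l" by auto
        then show "X \<in> {X \<in> hg_smile l H K. F ` X = Y}" using a by (auto simp: hg_smile_def)
      qed
    qed
    have inj: "inj_on (\<lambda>X. shift_set X l) {X\<in>K. g ` X = g ` X0}"
      by (rule inj_onI) (metis shinv)
    show ?thesis
      unfolding F_def[symmetric] calib_push_def calib_smile_def idx
      using YnfH
      apply (simp add: sum.reindex[OF inj] Yp)
    proof (rule sum.cong[OF refl])
      fix X assume "X \<in> {X \<in> K. g ` X = g ` X0}"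
      then have "X \<in> K" by simp
      then show "push_fun (shift_set X l) F (if shift_set X l \<in> H then \<rho> (shift_set X l)
              else (\<lambda>u. \<sigma> ((\<lambda>r. r - l) ` shift_set X l) (push_star (shift_set X l) (\<lambda>r. r - l) u))) w
          = push_fun X g (\<sigma> X) (push_star Y (\<lambda>r. r - p) w)"
        using shH[OF \<open>X \<in> K\<close>] shinv[of X] LB[where F=F and l=l and g=g and p=p, OF Fhigh w Ysub, of X "\<sigma> X"]
        by simp
    qed
  qed
qed

end
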